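(* For all $0<x<\pi/2$, \[ \frac{\frac{2\pi^4}{3}x^3+\left(\frac{8\pi^4}{15}-\frac{16\pi^2}{3}\right)x^5}{(\pi^2-4x^2)^2}<x\sec^2x-\tan x<\frac{\frac{2\pi^4}{3}x^3+\left(\frac{256}{\pi^2}-\frac{8\pi^2}{3}\right)x^5}{(\pi^2-4x^2)^2}, \] and the constants $\frac{8\pi^4}{15}-\frac{16\pi^2}{3}$ and $\frac{256}{\pi^2}-\frac{8\pi^2}{3}$ are the best possible. *)

theory Defs
  imports Complex_Main
begin

definition f20 :: "real \<Rightarrow> real" where
  "f20 x = x / (cos x)\<^sup>2 - tan x"

definition bound20 :: "real \<Rightarrow> real \<Rightarrow> real" where
  "bound20 c x = (2 * pi^4 / 3 * x^3 + c * x^5) / (pi\<^sup>2 - 4 * x\<^sup>2)\<^sup>2"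

end

theory Submission
  imports Defs "HOL-Analysis.Gamma_Function" "HOL-Real_Asymp.Real_Asymp"
begin


lemma Gamma_refl_real:
  assumes "0 < y" "y < 1"
  shows "Gamma y * Gamma (1 - y) = pi / sin (pi * y)"
proof -
  have e: "complex_of_real (1 - y) = 1 - complex_of_real y" by simp
  have "complex_of_real (Gamma y * Gamma (1 - y)) = Gamma (complex_of_real y) * Gamma (complex_of_real (1 - y))"
    by (simp only: Gamma_complex_of_real of_real_mult)
  also have "\<dots> = Gamma (complex_of_real y) * Gamma (1 - complex_of_real y)" by (simp only: e)
  also have "\<dots> = of_real pi / sin (of_real pi * of_real y)" by (rule Gamma_reflection_complex)
  also have "\<dots> = complex_of_real (pi / sin (pi * y))"
    by (simp flip: sin_of_real of_real_mult)
  finally show ?thesis by (simp only: of_real_eq_iff)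
qed

lemma nonpos_aux: "(y::real) > 0 \<Longrightarrow> y \<notin> \<int>\<^sub>\<le>\<^sub>0"
  using nonpos_Ints_nonpos by fastforce

lemma sin_pos_01: "0 < y \<Longrightarrow> y < 1 \<Longrightarrow> sin (pi * y) > 0"
  by (rule sin_gt_zero) auto

lemma Digamma_refl:
  assumes "0 < y" "y < 1"
  shows "Digamma y - Digamma (1 - y) = - (pi * cos (pi * y) / sin (pi * y))"
proof -
  define S where "S = {0<..<(1::real)}"
  define \<phi> where "\<phi> = (\<lambda>y. ln_Gamma y + ln_Gamma (1 - y) + ln (sin (pi * y)))"
  have eq: "ln pi = \<phi> z" if "z \<in> S" for z
  proof -
    have z: "0 < z" "z < 1" using that by (auto simp: S_def)
    have "\<phi> z = ln (Gamma z * Gamma (1 - z) * sin (pi * z))"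
    proof -
      have p: "Gamma z > 0" "Gamma (1 - z) > 0" "sin (pi * z) > 0"
        using z sin_pos_01[OF z] Gamma_real_pos[of z] Gamma_real_pos[of "1-z"] by auto
      have "ln (Gamma z * Gamma (1 - z) * sin (pi * z)) = ln (Gamma z) + ln (Gamma (1 - z)) + ln (sin (pi * z))"
        using p by (simp add: ln_mult)
      then show ?thesis using z by (simp add: \<phi>_def ln_Gamma_real_pos)
    qed
    also have "\<dots> = ln pi" using Gamma_refl_real[OF z] sin_pos_01[OF z] by simp
    finally show ?thesis by simp
  qed
  have d1: "(\<phi> has_field_derivative 0) (at y)"
    by (rule has_field_derivative_transform_within_open[OF DERIV_const _ _ eq])
       (use assms in \<open>auto simp: S_def\<close>)
  have d2: "(\<phi> has_field_derivative (Digamma y - Digamma (1 - y) + pi * cos (pi * y) / sin (pi * y))) (at y)"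
  proof -
    have a: "(ln_Gamma has_field_derivative Digamma y) (at y)"
      using assms by (intro has_field_derivative_ln_Gamma_real) auto
    have b: "((\<lambda>y. ln_Gamma (1 - y)) has_field_derivative (Digamma (1 - y) * (0 - 1))) (at y)"
      by (rule DERIV_chain2[OF has_field_derivative_ln_Gamma_real])
         (use assms in \<open>auto intro!: derivative_eq_intros\<close>)
    have c: "((\<lambda>y. ln (sin (pi * y))) has_field_derivative (pi * cos (pi * y) / sin (pi * y))) (at y)"
      using sin_pos_01[OF assms] by (auto intro!: derivative_eq_intros simp: field_simps)
    show ?thesis
      using DERIV_add[OF DERIV_add[OF a b] c] by (simp add: \<phi>_def field_simps)
  qed
  from DERIV_unique[OF d1 d2] show ?thesis by simp
qed

lemma Polygamma_refl:
  assumes "0 < y" "y < 1"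
  shows "Polygamma 1 y + Polygamma 1 (1 - y) = pi^2 / (sin (pi * y))^2"
proof -
  define S where "S = {0<..<(1::real)}"
  have eq: "- (pi * cos (pi * z) / sin (pi * z)) = Digamma z - Digamma (1 - z)" if "z \<in> S" for z
    using Digamma_refl[of z] that by (auto simp: S_def)
  have s: "sin (pi * y) > 0" using sin_pos_01[OF assms] .
  have d1: "((\<lambda>z. - (pi * cos (pi * z) / sin (pi * z))) has_field_derivative pi^2 / (sin (pi * y))^2) (at y)"
    using s apply (auto intro!: derivative_eq_intros simp: field_simps power2_eq_square)
  proof -
    have "cos (pi * y) * cos (pi * y) = 1 - sin (pi * y) * sin (pi * y)"
      using sin_cos_squared_add[of "pi*y"] by (simp add: power2_eq_square)
    then show "pi * (pi * (cos (pi * y) * (cos (pi * y) * (sin (pi * y) * sin (pi * y))))) +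
     pi * (pi * (sin (pi * y) * (sin (pi * y) * (sin (pi * y) * sin (pi * y))))) =
     pi * (pi * (sin (pi * y) * sin (pi * y)))" using sin_cos_squared_add[of "pi*y"] by algebra
  qed
  have d1': "((\<lambda>z. Digamma z - Digamma (1 - z)) has_field_derivative pi^2 / (sin (pi * y))^2) (at y)"
    by (rule has_field_derivative_transform_within_open[OF d1 _ _ eq]) (use assms in \<open>auto simp: S_def\<close>)
  have a: "(Digamma has_field_derivative Polygamma 1 y) (at y)"
    using has_field_derivative_Polygamma[of y 0 UNIV] nonpos_aux assms by auto
  have b: "((\<lambda>z. Digamma (1 - z)) has_field_derivative (Polygamma 1 (1 - y) * (0 - 1))) (at y)"
  proof -
    have a0: "(Polygamma 0 has_field_derivative Polygamma 1 (1-y)) (at (1-y))"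
      using has_field_derivative_Polygamma[of "1-y" 0 UNIV] nonpos_aux[of "1-y"] assms by simp
    show ?thesis
    proof -
      have d: "((\<lambda>z. 1 - z) has_field_derivative (0-1)) (at y)" by (auto intro!: derivative_eq_intros)
      show ?thesis using DERIV_chain2[of _ _ "\<lambda>z. 1 - z", OF a0 d] by simp
    qed
  qed
  have d2: "((\<lambda>z. Digamma z - Digamma (1 - z)) has_field_derivative (Polygamma 1 y + Polygamma 1 (1 - y))) (at y)"
    using DERIV_diff[OF a b] by simp
  from DERIV_unique[OF d2 d1'] show ?thesis .
qed

lemma Digamma_diff_sums:
  assumes "(y::real) > 0" "y < 1"
  shows "(\<lambda>k. inverse ((1 - y) + real k) - inverse (y + real k)) sums (Digamma y - Digamma (1 - y))"
proof -
  have a: "(\<lambda>k. inverse (real (Suc k)) - inverse (y + real k)) sums (Digamma y + euler_mascheroni)"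
    using summable_Digamma[of y] assms by (simp add: Digamma_def summable_sums)
  have b: "(\<lambda>k. inverse (real (Suc k)) - inverse ((1 - y) + real k)) sums (Digamma (1 - y) + euler_mascheroni)"
    using summable_Digamma[of "1 - y"] assms by (simp add: Digamma_def summable_sums)
  show ?thesis using sums_diff[OF a b] by simp
qed

lemma Polygamma1_sums:
  assumes "(z::real) > 0"
  shows "(\<lambda>k. inverse ((z + real k)^2)) sums (Polygamma 1 z)"
  using Polygamma_LIMSEQ[of z 1] assms by (simp add: eval_nat_numeral)

lemma key_id:
  fixes A B t p :: real
  assumes "A > 0" "B > 0" "A - B = 2 * t"
  shows "(t * (inverse (A^2) + inverse (B^2)) - (inverse B - inverse A)) / p = 4 * t^3 / (p * A^2 * B^2)"
proof -
  have nz: "A \<noteq> 0" "B \<noteq> 0" using assms by auto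
  have A: "A = B + 2 * t" using assms by simp
  have "t * (inverse (A^2) + inverse (B^2)) - (inverse B - inverse A) = 4 * t^3 / (A^2 * B^2)"
    using nz by (simp add: field_simps power2_eq_square eval_nat_numeral) (simp add: A algebra_simps)
  then show ?thesis by (simp add: field_simps)
qed

lemma key_id2:
  fixes A B t p :: real
  assumes "A > 0" "B > 0" "p > 0"
  shows "4 * t^3 / (p * A^2 * B^2) = 64 * (t * p)^3 / (p^4 * (4 * A * B)^2)"
proof -
  have nz: "A \<noteq> 0" "B \<noteq> 0" "p \<noteq> 0" using assms by auto
  show ?thesis using nz by (simp add: field_simps power2_eq_square eval_nat_numeral)
qed

lemma f20_sums:
  assumes "0 < x" "x < pi / 2"
  shows "(\<lambda>k. 64 * x^3 / (pi^4 * ((2 * real k + 1)^2 - 4 * x^2 / pi^2)^2)) sums f20 x"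
proof -
  define t where "t = x / pi"
  define y where "y = 1/2 + t"
  have t: "0 < t" "t < 1/2" using assms pi_gt_zero by (auto simp: t_def field_simps)
  have y: "0 < y" "y < 1" using t by (auto simp: y_def)
  have P: "Polygamma 1 y + Polygamma 1 (1 - y) = pi^2 / (cos x)^2"
    using Polygamma_refl[OF y] by (simp add: y_def t_def distrib_left sin_add)
  have D: "Digamma y - Digamma (1 - y) = pi * tan x"
    using Digamma_refl[OF y] by (simp add: y_def t_def distrib_left sin_add cos_add tan_def)
  have cx: "cos x > 0" using assms by (intro cos_gt_zero_pi) auto
  have S: "(\<lambda>k. (t * (inverse ((y + real k)^2) + inverse ((1 - y + real k)^2))
            - (inverse ((1 - y) + real k) - inverse (y + real k))) / pi)
          sums ((t * (Polygamma 1 y + Polygamma 1 (1 - y)) - (Digamma y - Digamma (1 - y))) / pi)"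
    by (intro sums_divide sums_diff sums_mult sums_add Polygamma1_sums Digamma_diff_sums y) (use y in auto)
  have val: "(t * (Polygamma 1 y + Polygamma 1 (1 - y)) - (Digamma y - Digamma (1 - y))) / pi = f20 x"
    unfolding P D f20_def t_def using cx pi_gt_zero by (simp add: field_simps power2_eq_square)
  have tm: "(t * (inverse ((y + real k)^2) + inverse ((1 - y + real k)^2))
            - (inverse ((1 - y) + real k) - inverse (y + real k))) / pi
        = 64 * x^3 / (pi^4 * ((2 * real k + 1)^2 - 4 * x^2 / pi^2)^2)" for k
  proof -
    have p1: "y + real k > 0" "1 - y + real k > 0" using y by auto
    have xe: "x = t * pi" using pi_gt_zero by (simp add: t_def)
    have q: "(2 * real k + 1)^2 - 4 * x^2 / pi^2 = 4 * (y + real k) * (1 - y + real k)"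
      unfolding xe y_def using pi_gt_zero by (simp add: field_simps power2_eq_square)
    have ab: "(y + real k) - (1 - y + real k) = 2 * t" by (simp add: y_def)
    have "(t * (inverse ((y + real k)^2) + inverse ((1 - y + real k)^2))
            - (inverse ((1 - y) + real k) - inverse (y + real k))) / pi
        = 4 * t^3 / (pi * (y + real k)^2 * (1 - y + real k)^2)"
      using key_id[OF p1 ab, of pi] by simp
    also have "\<dots> = 64 * x^3 / (pi^4 * ((2 * real k + 1)^2 - 4 * x^2 / pi^2)^2)"
      unfolding q unfolding xe using key_id2[OF p1 pi_gt_zero, of t] by simp
    finally show ?thesis .
  qed
  show ?thesis using S unfolding val tm .
qed



lemma id1: fixes M u :: real assumes "M \<noteq> 0" "M - u \<noteq> 0"
  shows "1/(M-u)^2 - 1/M^2 - 2*u/M^3 = u^2*(3*M-2*u)/(M^3*(M-u)^2)"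
proof -
  have h: "(M-u)^2 \<noteq> 0" "M^2 \<noteq> 0" "M^3 \<noteq> 0" using assms by auto
  show ?thesis using h apply (simp add: divide_simps) apply (thin_tac _)+ by (simp add: eval_nat_numeral algebra_simps)
qed

lemma id2: fixes M u :: real assumes "M \<noteq> 0" "M - u \<noteq> 0"
  shows "(1-u)^2/(M-u)^2 - (1/M^2 - 2*u*(M-1)/M^3) = u^2*(M*(M-1)*(M-3) + 2*(M-1)*u)/(M^3*(M-u)^2)"
proof -
  have h: "(M-u)^2 \<noteq> 0" "M^2 \<noteq> 0" "M^3 \<noteq> 0" using assms by auto
  show ?thesis using h apply (simp add: divide_simps) apply (thin_tac _)+ by (simp add: eval_nat_numeral algebra_simps)
qed

lemma id3: fixes M u :: real assumes "M \<noteq> 0" "M - u \<noteq> 0"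
  shows "(1-u)/M^2 - (1-u)^2/(M-u)^2 = (1-u)*u*(M^2-2*M+u)/(M^2*(M-u)^2)"
proof -
  have h: "(M-u)^2 \<noteq> 0" "M^2 \<noteq> 0" "M^3 \<noteq> 0" using assms by auto
  show ?thesis using h apply (simp add: divide_simps) apply (thin_tac _)+ by (simp add: eval_nat_numeral algebra_simps)
qed

lemma half_sq: fixes M u :: real assumes "M \<ge> 1" "u \<le> 1/2"
  shows "(M/2)^2 \<le> (M-u)^2"
  using assms by (intro power_mono) auto

lemma ptK: fixes M u :: real assumes "M \<ge> 1" "0 \<le> u" "u \<le> 1/2"
  shows "0 \<le> 1/(M-u)^2 - 1/M^2 - 2*u/M^3" "1/(M-u)^2 - 1/M^2 - 2*u/M^3 \<le> 12*u^2/M^2"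
proof -
  have e: "1/(M-u)^2 - 1/M^2 - 2*u/M^3 = u^2*(3*M-2*u)/(M^3*(M-u)^2)"
    using assms by (intro id1) auto
  show "0 \<le> 1/(M-u)^2 - 1/M^2 - 2*u/M^3" unfolding e using assms by auto
  have "u^2*(3*M-2*u)/(M^3*(M-u)^2) \<le> u^2*(3*M)/(M^3*(M/2)^2)"
    using assms half_sq[OF assms(1,3)] by (intro frac_le mult_left_mono) auto
  also have "\<dots> = 12*u^2/M^4" using assms by (simp add: field_simps eval_nat_numeral)
  also have "\<dots> \<le> 12*u^2/M^2" using assms
    by (intro divide_left_mono) (auto simp: power_increasing)
  finally show "1/(M-u)^2 - 1/M^2 - 2*u/M^3 \<le> 12*u^2/M^2" unfolding e .
qed

lemma ptL: fixes M u :: real assumes "M \<ge> 1" "0 \<le> u" "u < 1" "M = 1 \<or> M \<ge> 3"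
  shows "1/M^2 - 2*u*(M-1)/M^3 \<le> (1-u)^2/(M-u)^2"
proof -
  have e: "(1-u)^2/(M-u)^2 - (1/M^2 - 2*u*(M-1)/M^3) = u^2*(M*(M-1)*(M-3) + 2*(M-1)*u)/(M^3*(M-u)^2)"
    using assms by (intro id2) auto
  have "0 \<le> M*(M-1)*(M-3) + 2*(M-1)*u" using assms by auto
  then have "0 \<le> u^2*(M*(M-1)*(M-3) + 2*(M-1)*u)/(M^3*(M-u)^2)" using assms by auto
  then show ?thesis using e by linarith
qed

lemma ptL_strict: fixes M u :: real assumes "M \<ge> 9" "0 < u" "u < 1"
  shows "1/M^2 - 2*u*(M-1)/M^3 < (1-u)^2/(M-u)^2"
proof -
  have e: "(1-u)^2/(M-u)^2 - (1/M^2 - 2*u*(M-1)/M^3) = u^2*(M*(M-1)*(M-3) + 2*(M-1)*u)/(M^3*(M-u)^2)"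
    using assms by (intro id2) auto
  have "0 < M*(M-1)*(M-3) + 2*(M-1)*u" using assms by (auto intro!: add_pos_nonneg)
  then have "0 < u^2*(M*(M-1)*(M-3) + 2*(M-1)*u)/(M^3*(M-u)^2)" using assms by auto
  then show ?thesis using e by linarith
qed

lemma ptL2: fixes M u :: real assumes "M \<ge> 1" "0 \<le> u" "u \<le> 1/2"
  shows "(1-u)^2/(M-u)^2 \<le> 1/M^2 - 2*u*(M-1)/M^3 + 12*u^2/M^2"
proof -
  have e: "(1-u)^2/(M-u)^2 - (1/M^2 - 2*u*(M-1)/M^3) = u^2*(M*(M-1)*(M-3) + 2*(M-1)*u)/(M^3*(M-u)^2)"
    using assms by (intro id2) auto
  have n1: "M*(M-1)*(M-3) \<le> M^3"
  proof -
    have "(M-1)*(M-3) \<le> M*M" using assms by (simp add: algebra_simps)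
    then have "M*((M-1)*(M-3)) \<le> M*(M*M)" using assms by (intro mult_left_mono) auto
    then show ?thesis by (simp add: eval_nat_numeral mult.assoc)
  qed
  have n2: "2*(M-1)*u \<le> 2*M^3"
  proof -
    have "2*(M-1)*u \<le> 2*M*1" using assms by (intro mult_mono) auto
    also have "\<dots> \<le> 2*M^3" using assms by (simp add: power_increasing[of 1 3 M, simplified])
    finally show ?thesis .
  qed
  have d: "0 < M^3*(M-u)^2" using assms by auto
  have "u^2*(M*(M-1)*(M-3) + 2*(M-1)*u)/(M^3*(M-u)^2) \<le> u^2*(3*M^3)/(M^3*(M-u)^2)"
    using n1 n2 d by (intro divide_right_mono mult_left_mono) auto
  also have "\<dots> = 3*u^2/(M-u)^2" using assms by simp
  also have "\<dots> \<le> 3*u^2/(M/2)^2"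
    using assms half_sq[OF assms(1,3)] by (intro divide_left_mono) auto
  also have "\<dots> = 12*u^2/M^2" by (simp add: field_simps eval_nat_numeral)
  finally show ?thesis using e by linarith
qed

lemma ptU: fixes M u :: real assumes "M \<ge> 9" "0 < u" "u < 1"
  shows "(1-u)^2/(M-u)^2 < (1-u)/M^2" "(1-u)/M^2 - (1-u)^2/(M-u)^2 \<le> 4*(1-u)/M^2"
proof -
  have e: "(1-u)/M^2 - (1-u)^2/(M-u)^2 = (1-u)*u*(M^2-2*M+u)/(M^2*(M-u)^2)"
    using assms by (intro id3) auto
  have "9*M \<le> M*M" using assms by (intro mult_right_mono) auto
  then have p: "0 < M^2-2*M+u" using assms unfolding power2_eq_square by linarith
  have "0 < (1-u)*u*(M^2-2*M+u)/(M^2*(M-u)^2)" using assms p by auto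
  then show "(1-u)^2/(M-u)^2 < (1-u)/M^2" using e by linarith
  have "u*(M^2-2*M+u) \<le> 1*(M^2)" using assms p by (intro mult_mono) auto
  then have "(1-u)*u*(M^2-2*M+u)/(M^2*(M-u)^2) \<le> (1-u)*M^2/(M^2*(M-u)^2)"
    using assms by (intro divide_right_mono) (auto simp: mult.assoc intro!: mult_left_mono)
  also have "\<dots> = (1-u)/(M-u)^2" using assms by simp
  also have "\<dots> \<le> (1-u)/(M/2)^2"
    using assms half_sq[of M "1/2"] by (intro divide_left_mono power_mono) auto
  also have "\<dots> = 4*(1-u)/M^2" by (simp add: field_simps eval_nat_numeral)
  finally show "(1-u)/M^2 - (1-u)^2/(M-u)^2 \<le> 4*(1-u)/M^2" by (simp only: e)
qed



definition Mk :: "nat \<Rightarrow> real" where "Mk k = (2 * real k + 1)^2"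
definition K4 :: real where "K4 = (\<Sum>k. 1 / Mk k ^ 2)"
definition K6 :: real where "K6 = (\<Sum>k. 1 / Mk k ^ 3)"

lemma Mk_ge: "Mk k \<ge> (real k + 1)^2" "Mk k \<ge> 1" "Mk 0 = 1"
proof -
  show "Mk k \<ge> (real k + 1)^2" unfolding Mk_def by (intro power_mono) auto
  moreover have "1 \<le> (real k + 1)^2" by (simp add: one_le_power)
  ultimately show "Mk k \<ge> 1" by linarith
  show "Mk 0 = 1" by (simp add: Mk_def)
qed

lemma Mk_pos [simp]: "0 < Mk k" using Mk_ge(2)[of k] by linarith

lemma Mk_ge9: "k \<ge> 1 \<Longrightarrow> Mk k \<ge> 9"
proof -
  assume "k \<ge> 1"
  then have "(3::real)^2 \<le> (2 * real k + 1)^2" by (intro power_mono) auto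
  then show ?thesis by (simp add: Mk_def)
qed

lemma summable_inv_sq: "summable (\<lambda>k. 1 / (real k + 1)^2)"
  using inverse_squares_sums sums_summable by (simp add: add.commute)

lemma summable_Mk: "summable (\<lambda>k. 1 / Mk k ^ 2)" "summable (\<lambda>k. 1 / Mk k ^ 3)"
proof -
  have b: "1 / Mk k ^ j \<le> 1 / (real k + 1)^2" if "j \<ge> 1" for k j
  proof -
    have "(real k + 1)^2 \<le> Mk k" by (rule Mk_ge)
    also have "Mk k \<le> Mk k ^ j" using Mk_ge(2)[of k] that
      by (metis power_increasing power_one_right)
    finally have "(real k + 1)^2 \<le> Mk k ^ j" .
    moreover have "0 < (real k + 1)^2" by simp
    ultimately show ?thesis by (intro frac_le) auto
  qed
  show "summable (\<lambda>k. 1 / Mk k ^ 2)"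
    by (rule summable_comparison_test[OF _ summable_inv_sq]) (use b in \<open>auto simp: abs_of_pos intro!: exI[of _ 0]\<close>)
  show "summable (\<lambda>k. 1 / Mk k ^ 3)"
    by (rule summable_comparison_test[OF _ summable_inv_sq]) (use b in \<open>auto simp: abs_of_pos intro!: exI[of _ 0]\<close>)
qed

lemma K4_sums: "(\<lambda>k. 1 / Mk k ^ 2) sums K4" using summable_Mk(1) unfolding K4_def by (rule summable_sums)
lemma K6_sums: "(\<lambda>k. 1 / Mk k ^ 3) sums K6" using summable_Mk(2) unfolding K6_def by (rule summable_sums)

definition Sv :: "real \<Rightarrow> real" where "Sv x = pi^4 * f20 x / (64 * x^3)"
definition uu :: "real \<Rightarrow> real" where "uu x = 4 * x^2 / pi^2"

lemma uu_range: assumes "0 < x" "x < pi/2" shows "0 < uu x" "uu x < 1"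
proof -
  show "0 < uu x" using assms by (simp add: uu_def)
  have "x^2 < (pi/2)^2" using assms by (intro power_strict_mono) auto
  then show "uu x < 1" by (simp add: uu_def field_simps power_divide)
qed

lemma S_sums: assumes "0 < x" "x < pi/2"
  shows "(\<lambda>k. 1 / (Mk k - uu x)^2) sums Sv x"
proof -
  have "(\<lambda>k. pi^4 / (64 * x^3) * (64 * x^3 / (pi^4 * ((2 * real k + 1)^2 - 4 * x^2 / pi^2)^2)))
        sums (pi^4 / (64 * x^3) * f20 x)"
    by (intro sums_mult f20_sums assms)
  moreover have "pi^4 / (64 * x^3) * (64 * x^3 / (pi^4 * ((2 * real k + 1)^2 - 4 * x^2 / pi^2)^2))
      = 1 / (Mk k - uu x)^2" for k
    using assms by (simp add: Mk_def uu_def)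
  ultimately show ?thesis by (simp add: Sv_def)
qed

lemma boundK:
  assumes "0 < x" "x < pi/2" "uu x \<le> 1/2"
  shows "K4 + 2 * uu x * K6 \<le> Sv x" "Sv x \<le> K4 + 2 * uu x * K6 + 12 * (uu x)^2 * K4"
proof -
  define u where "u = uu x"
  have u: "0 < u" "u \<le> 1/2" using uu_range[OF assms(1,2)] assms(3) by (auto simp: u_def)
  have D: "(\<lambda>k. 1 / (Mk k - u)^2 - 1 / Mk k ^ 2 - 2 * u * (1 / Mk k ^ 3)) sums (Sv x - K4 - 2 * u * K6)"
    unfolding u_def by (intro sums_diff S_sums K4_sums sums_mult K6_sums assms)
  have t: "0 \<le> 1 / (Mk k - u)^2 - 1 / Mk k ^ 2 - 2 * u * (1 / Mk k ^ 3)"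
          "1 / (Mk k - u)^2 - 1 / Mk k ^ 2 - 2 * u * (1 / Mk k ^ 3) \<le> 12 * u^2 * (1 / Mk k ^ 2)" for k
    using ptK[OF Mk_ge(2)[of k], of u] u by auto
  have "0 \<le> Sv x - K4 - 2 * u * K6" using sums_le[OF t(1) sums_zero D] .
  then show "K4 + 2 * uu x * K6 \<le> Sv x" by (simp add: u_def)
  have "Sv x - K4 - 2 * u * K6 \<le> 12 * u^2 * K4"
    using sums_le[OF t(2) D sums_mult[OF K4_sums]] .
  then show "Sv x \<le> K4 + 2 * uu x * K6 + 12 * (uu x)^2 * K4" by (simp add: u_def)
qed

lemma Lsum: "(\<lambda>k. 1 / Mk k ^ 2 - 2 * u * (Mk k - 1) / Mk k ^ 3) sums (K4 - 2 * u * (K4 - K6))"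
proof -
  have "(\<lambda>k. 1 / Mk k ^ 2 - 2 * u * (1 / Mk k ^ 2 - 1 / Mk k ^ 3)) sums (K4 - 2 * u * (K4 - K6))"
    by (intro sums_diff sums_mult K4_sums K6_sums)
  moreover have "1 / Mk k ^ 2 - 2 * u * (1 / Mk k ^ 2 - 1 / Mk k ^ 3) = 1 / Mk k ^ 2 - 2 * u * (Mk k - 1) / Mk k ^ 3" for k
  proof -
    have "Mk k \<noteq> 0" using Mk_pos[of k] by linarith
    then show ?thesis by (simp add: divide_simps) (simp add: algebra_simps eval_nat_numeral)
  qed
  ultimately show ?thesis by simp
qed

lemma rsum: assumes "0 < x" "x < pi/2"
  shows "(\<lambda>k. (1 - uu x)^2 / (Mk k - uu x)^2) sums ((1 - uu x)^2 * Sv x)"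
  using sums_mult[OF S_sums[OF assms], of "(1 - uu x)^2"] by simp

lemma Usum: "(\<lambda>k. (1 - u) / Mk k ^ 2 + (if k = 0 then u else 0)) sums ((1 - u) * K4 + u)"
proof -
  have "(\<lambda>k. (1 - u) * (1 / Mk k ^ 2) + (if k = 0 then u else 0)) sums ((1 - u) * K4 + u)"
    by (intro sums_add sums_mult K4_sums sums_single[of 0 "\<lambda>_. u", simplified])
  then show ?thesis by simp
qed

lemma lowerS:
  assumes "0 < x" "x < pi/2"
  shows "K4 - 2 * uu x * (K4 - K6) < (1 - uu x)^2 * Sv x"
proof -
  define u where "u = uu x"
  have u: "0 < u" "u < 1" using uu_range[OF assms(1,2)] by (auto simp: u_def)
  have D: "(\<lambda>k. (1 - u)^2 / (Mk k - u)^2 - (1 / Mk k ^ 2 - 2 * u * (Mk k - 1) / Mk k ^ 3))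
      sums ((1 - u)^2 * Sv x - (K4 - 2 * u * (K4 - K6)))"
    unfolding u_def by (intro sums_diff rsum Lsum assms)
  have nn: "0 \<le> (1 - u)^2 / (Mk k - u)^2 - (1 / Mk k ^ 2 - 2 * u * (Mk k - 1) / Mk k ^ 3)" for k
  proof (cases "k = 0")
    case True then show ?thesis using u by (simp add: Mk_ge(3))
  next
    case False then have "Mk k \<ge> 9" by (intro Mk_ge9) auto
    then show ?thesis using ptL[of "Mk k" u] u by auto
  qed
  have ps: "0 < (1 - u)^2 / (Mk 1 - u)^2 - (1 / Mk 1 ^ 2 - 2 * u * (Mk 1 - 1) / Mk 1 ^ 3)"
    using ptL_strict[OF Mk_ge9[of 1] u] by simp
  have "0 < (1 - u)^2 * Sv x - (K4 - 2 * u * (K4 - K6))"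
    using suminf_pos2[OF sums_summable[OF D] nn ps] sums_unique[OF D] by simp
  then show ?thesis by (simp add: u_def)
qed

lemma lowerS2:
  assumes "0 < x" "x < pi/2" "uu x \<le> 1/2"
  shows "(1 - uu x)^2 * Sv x \<le> K4 - 2 * uu x * (K4 - K6) + 12 * (uu x)^2 * K4"
proof -
  define u where "u = uu x"
  have u: "0 < u" "u \<le> 1/2" using uu_range[OF assms(1,2)] assms(3) by (auto simp: u_def)
  have R: "(\<lambda>k. 1 / Mk k ^ 2 - 2 * u * (Mk k - 1) / Mk k ^ 3 + 12 * u^2 * (1 / Mk k ^ 2))
      sums (K4 - 2 * u * (K4 - K6) + 12 * u^2 * K4)"
    by (intro sums_add Lsum sums_mult K4_sums)
  have "(1 - u)^2 * Sv x \<le> K4 - 2 * u * (K4 - K6) + 12 * u^2 * K4"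
    by (rule sums_le[OF _ rsum[OF assms(1,2), folded u_def] R])
       (use ptL2[OF Mk_ge(2), of u] u in auto)
  then show ?thesis by (simp add: u_def)
qed

lemma upperS:
  assumes "0 < x" "x < pi/2"
  shows "(1 - uu x)^2 * Sv x < (1 - uu x) * K4 + uu x"
        "(1 - uu x) * K4 + uu x - (1 - uu x)^2 * Sv x \<le> 4 * (1 - uu x) * K4"
proof -
  define u where "u = uu x"
  have u: "0 < u" "u < 1" using uu_range[OF assms(1,2)] by (auto simp: u_def)
  have D: "(\<lambda>k. ((1 - u) / Mk k ^ 2 + (if k = 0 then u else 0)) - (1 - u)^2 / (Mk k - u)^2)
      sums ((1 - u) * K4 + u - (1 - u)^2 * Sv x)"
    unfolding u_def by (intro sums_diff rsum Usum assms)
  have t: "0 \<le> ((1 - u) / Mk k ^ 2 + (if k = 0 then u else 0)) - (1 - u)^2 / (Mk k - u)^2 \<and>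
      ((1 - u) / Mk k ^ 2 + (if k = 0 then u else 0)) - (1 - u)^2 / (Mk k - u)^2 \<le> 4 * (1 - u) * (1 / Mk k ^ 2)" for k
  proof (cases "k = 0")
    case True then show ?thesis using u by (simp add: Mk_ge(3))
  next
    case False then have "Mk k \<ge> 9" by (intro Mk_ge9) auto
    then show ?thesis using ptU[of "Mk k" u] u False by auto
  qed
  have ps: "0 < ((1 - u) / Mk 1 ^ 2 + (if (1::nat) = 0 then u else 0)) - (1 - u)^2 / (Mk 1 - u)^2"
    using ptU(1)[OF Mk_ge9[of 1] u] by simp
  have "0 < (1 - u) * K4 + u - (1 - u)^2 * Sv x"
    using suminf_pos2[OF sums_summable[OF D] _ ps] t sums_unique[OF D] by simp
  then show "(1 - uu x)^2 * Sv x < (1 - uu x) * K4 + uu x" by (simp add: u_def)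
  have "(1 - u) * K4 + u - (1 - u)^2 * Sv x \<le> 4 * (1 - u) * K4"
    by (rule sums_le[OF _ D sums_mult[OF K4_sums]]) (use t in auto)
  then show "(1 - uu x) * K4 + uu x - (1 - uu x)^2 * Sv x \<le> 4 * (1 - uu x) * K4" by (simp add: u_def)
qed



lemma sandwich0:
  fixes g :: "real \<Rightarrow> real"
  assumes "eventually (\<lambda>x. L \<le> g x \<and> g x \<le> L + C * x^2 + D * x^4) (at_right 0)"
  shows "(g \<longlongrightarrow> L) (at_right 0)"
proof (rule tendsto_sandwich[of "\<lambda>_. L" g _ "\<lambda>x. L + C * x^2 + D * x^4"])
  show "eventually (\<lambda>x. L \<le> g x) (at_right 0)" using assms by (rule eventually_mono) auto
  show "eventually (\<lambda>x. g x \<le> L + C * x^2 + D * x^4) (at_right 0)" using assms by (rule eventually_mono) auto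
  show "((\<lambda>_. L) \<longlongrightarrow> L) (at_right 0)" by simp
  have "((\<lambda>x. L + C * x^2 + D * x^4) \<longlongrightarrow> L + C * 0^2 + D * 0^4) (at_right (0::real))"
    by (intro tendsto_intros)
  then show "((\<lambda>x. L + C * x^2 + D * x^4) \<longlongrightarrow> L) (at_right 0)" by simp
qed

lemma K6_nonneg: "0 \<le> K6"
  unfolding K6_def by (intro suminf_nonneg summable_Mk) (auto intro: less_imp_le)

lemma uu_small: assumes "0 < x" "x < 1" shows "uu x \<le> 1/2" "x < pi/2"
proof -
  have "x^2 \<le> 1" using assms by (simp add: power_le_one)
  moreover have "8 \<le> pi^2"
  proof -
    have "3 * 3 \<le> pi * pi" using pi_gt3 by (intro mult_mono) auto
    then show ?thesis by (simp add: power2_eq_square)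
  qed
  ultimately show "uu x \<le> 1/2" unfolding uu_def using pi_gt_zero by (simp add: field_simps)
  show "x < pi/2" using assms pi_gt3 by linarith
qed

lemma f20_Sv: "0 < x \<Longrightarrow> f20 x / x^3 = 64 * Sv x / pi^4"
  by (simp add: Sv_def field_simps)

lemma g1_lim: "((\<lambda>x. f20 x / x^3) \<longlongrightarrow> 64 * K4 / pi^4) (at_right 0)"
proof (rule sandwich0[where C = "512 * K6 / pi^6" and D = "12288 * K4 / pi^8"])
  show "eventually (\<lambda>x. 64 * K4 / pi^4 \<le> f20 x / x^3 \<and> f20 x / x^3 \<le> 64 * K4 / pi^4 + 512 * K6 / pi^6 * x^2 + 12288 * K4 / pi^8 * x^4) (at_right 0)"
    using eventually_at_right_real[of 0 1, OF zero_less_one]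
  proof (rule eventually_mono)
    fix x :: real assume "x \<in> {0<..<1}"
    then have x: "0 < x" "x < 1" by auto
    note s = uu_small[OF x]
    note b = boundK[OF x(1) s(2) s(1)]
    have "0 \<le> 2 * uu x * K6" using K6_nonneg uu_range[OF x(1) s(2)] by simp
    then have "K4 \<le> Sv x" using b(1) by linarith
    then have 1: "64 * K4 / pi^4 \<le> f20 x / x^3" unfolding f20_Sv[OF x(1)] by (simp add: divide_right_mono)
    have "f20 x / x^3 \<le> 64 * (K4 + 2 * uu x * K6 + 12 * (uu x)^2 * K4) / pi^4"
      unfolding f20_Sv[OF x(1)] using b(2) by (simp add: divide_right_mono)
    also have "\<dots> = 64 * K4 / pi^4 + 512 * K6 / pi^6 * x^2 + 12288 * K4 / pi^8 * x^4"
      by (simp add: uu_def field_simps eval_nat_numeral)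
    finally show "64 * K4 / pi^4 \<le> f20 x / x^3 \<and> f20 x / x^3 \<le> 64 * K4 / pi^4 + 512 * K6 / pi^6 * x^2 + 12288 * K4 / pi^8 * x^4"
      using 1 by simp
  qed
qed

lemma asymp1: "((\<lambda>x. f20 x / x^3) \<longlongrightarrow> 2/3) (at_right 0)"
  unfolding f20_def by real_asymp

lemma asymp2: "((\<lambda>x. (f20 x / x^3 - 2/3) / x^2) \<longlongrightarrow> 8/15) (at_right 0)"
  unfolding f20_def by real_asymp

lemma K4_val: "K4 = pi^4 / 96"
proof -
  have "64 * K4 / pi^4 = 2/3"
    using tendsto_unique[OF _ g1_lim asymp1] by simp
  then show ?thesis by (simp add: field_simps)
qed

lemma g2_lim: "((\<lambda>x. (f20 x / x^3 - 2/3) / x^2) \<longlongrightarrow> 512 * K6 / pi^6) (at_right 0)"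
proof (rule sandwich0[where C = "12288 * K4 / pi^8" and D = 0])
  show "eventually (\<lambda>x. 512 * K6 / pi^6 \<le> (f20 x / x^3 - 2/3) / x^2 \<and> (f20 x / x^3 - 2/3) / x^2 \<le> 512 * K6 / pi^6 + 12288 * K4 / pi^8 * x^2 + 0 * x^4) (at_right 0)"
    using eventually_at_right_real[of 0 1, OF zero_less_one]
  proof (rule eventually_mono)
    fix x :: real assume "x \<in> {0<..<1}"
    then have x: "0 < x" "x < 1" by auto
    note s = uu_small[OF x]
    note b = boundK[OF x(1) s(2) s(1)]
    have e: "(f20 x / x^3 - 2/3) / x^2 = 64 * (Sv x - K4) / (pi^4 * x^2)"
      unfolding f20_Sv[OF x(1)] K4_val using x by (simp add: field_simps)
    have "512 * K6 / pi^6 = 64 * (2 * uu x * K6) / (pi^4 * x^2)"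
      using x by (simp add: uu_def field_simps eval_nat_numeral)
    also have "\<dots> \<le> 64 * (Sv x - K4) / (pi^4 * x^2)"
      using b(1) x by (intro divide_right_mono) auto
    finally have 1: "512 * K6 / pi^6 \<le> (f20 x / x^3 - 2/3) / x^2" unfolding e .
    have "64 * (Sv x - K4) / (pi^4 * x^2) \<le> 64 * (2 * uu x * K6 + 12 * (uu x)^2 * K4) / (pi^4 * x^2)"
      using b(2) x by (intro divide_right_mono) auto
    also have "\<dots> = 512 * K6 / pi^6 + 12288 * K4 / pi^8 * x^2 + 0 * x^4"
      using x by (simp add: uu_def field_simps eval_nat_numeral)
    finally show "512 * K6 / pi^6 \<le> (f20 x / x^3 - 2/3) / x^2 \<and> (f20 x / x^3 - 2/3) / x^2 \<le> 512 * K6 / pi^6 + 12288 * K4 / pi^8 * x^2 + 0 * x^4"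
      using 1 e by simp
  qed
qed

lemma K6_val: "K6 = pi^6 / 960"
proof -
  have "512 * K6 / pi^6 = 8/15"
    using tendsto_unique[OF _ g2_lim asymp2] by simp
  then show ?thesis by (simp add: field_simps)
qed



lemma diff_eq:
  assumes "0 < x" "x < pi/2"
  shows "f20 x - bound20 c x = x^3 / (pi^4 * (1 - uu x)^2) * (64 * (1 - uu x)^2 * Sv x - (2 * pi^4 / 3 + c * pi^2 * uu x / 4))"
proof -
  have u: "uu x < 1" using uu_range[OF assms] by simp
  define w where "w = 1 - uu x"
  define A where "A = 2 * pi^4 / 3 + c * pi^2 * uu x / 4"
  have w: "0 < w" using u by (simp add: w_def)
  have e1: "pi^2 - 4 * x^2 = pi^2 * w" using pi_gt_zero by (simp add: w_def uu_def field_simps)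
  have e2: "2 * pi^4 / 3 * x^3 + c * x^5 = x^3 * A" using pi_gt_zero
    by (simp add: A_def uu_def field_simps eval_nat_numeral)
  have b: "bound20 c x = x^3 * A / (pi^4 * w^2)"
    unfolding bound20_def e1 e2 by (simp add: power_mult_distrib)
  have f: "f20 x = 64 * x^3 * Sv x / pi^4" using assms by (simp add: Sv_def field_simps)
  have "f20 x - bound20 c x = x^3 / (pi^4 * w^2) * (64 * w^2 * Sv x - A)"
    unfolding f b using w pi_gt_zero by (simp add: field_simps)
  then show ?thesis by (simp add: w_def A_def)
qed

lemma sign_iff:
  assumes "0 < x" "x < pi/2"
  shows "bound20 c x < f20 x \<longleftrightarrow> 2 * pi^4 / 3 + c * pi^2 * uu x / 4 < 64 * (1 - uu x)^2 * Sv x"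
proof -
  have u: "uu x < 1" using uu_range[OF assms] by simp
  have p: "0 < x^3 / (pi^4 * (1 - uu x)^2)" using assms u by auto
  have "bound20 c x < f20 x \<longleftrightarrow> 0 < f20 x - bound20 c x" by simp
  also have "\<dots> \<longleftrightarrow> 0 < 64 * (1 - uu x)^2 * Sv x - (2 * pi^4 / 3 + c * pi^2 * uu x / 4)"
    unfolding diff_eq[OF assms] using p zero_less_mult_iff by (metis less_asym)
  finally show ?thesis by simp
qed

lemma sign_iff2:
  assumes "0 < x" "x < pi/2"
  shows "f20 x < bound20 c x \<longleftrightarrow> 64 * (1 - uu x)^2 * Sv x < 2 * pi^4 / 3 + c * pi^2 * uu x / 4"
proof -
  have u: "uu x < 1" using uu_range[OF assms] by simp
  have p: "0 < x^3 / (pi^4 * (1 - uu x)^2)" using assms u by auto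
  have "f20 x < bound20 c x \<longleftrightarrow> f20 x - bound20 c x < 0" by simp
  also have "\<dots> \<longleftrightarrow> 64 * (1 - uu x)^2 * Sv x - (2 * pi^4 / 3 + c * pi^2 * uu x / 4) < 0"
    unfolding diff_eq[OF assms] using p by (metis mult_zero_right mult_less_cancel_left_pos)
  finally show ?thesis by simp
qed

lemma uu_sqrt: assumes "0 < u" "u < 1"
  shows "0 < pi/2 * sqrt u" "pi/2 * sqrt u < pi/2" "uu (pi/2 * sqrt u) = u"
proof -
  show "0 < pi/2 * sqrt u" using assms by simp
  have "sqrt u < 1" using assms by simp
  then show "pi/2 * sqrt u < pi/2" using pi_gt_zero by simp
  show "uu (pi/2 * sqrt u) = u" using assms pi_gt_zero by (simp add: uu_def power_mult_distrib power_divide)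
qed

lemma part1:
  assumes "0 < x" "x < pi / 2"
  shows "bound20 (8 * pi^4 / 15 - 16 * pi\<^sup>2 / 3) x < f20 x"
        "f20 x < bound20 (256 / pi\<^sup>2 - 8 * pi\<^sup>2 / 3) x"
proof -
  define u where "u = uu x"
  have l: "K4 - 2 * u * (K4 - K6) < (1 - u)^2 * Sv x" using lowerS[OF assms] by (simp add: u_def)
  have e: "64 * (K4 - 2 * u * (K4 - K6)) = 2 * pi^4 / 3 + (8 * pi^4 / 15 - 16 * pi\<^sup>2 / 3) * pi^2 * u / 4"
    unfolding K4_val K6_val by (simp add: field_simps eval_nat_numeral)
  show "bound20 (8 * pi^4 / 15 - 16 * pi\<^sup>2 / 3) x < f20 x"
    unfolding sign_iff[OF assms] u_def[symmetric]
  proof -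
    have "64 * (K4 - 2 * u * (K4 - K6)) < 64 * ((1 - u)^2 * Sv x)" using l by simp
    then show "2 * pi^4 / 3 + (8 * pi^4 / 15 - 16 * pi\<^sup>2 / 3) * pi^2 * u / 4 < 64 * (1 - u)^2 * Sv x"
      unfolding e by (simp only: mult.assoc)
  qed
  have r: "(1 - u)^2 * Sv x < (1 - u) * K4 + u" using upperS(1)[OF assms] by (simp add: u_def)
  have e': "64 * ((1 - u) * K4 + u) = 2 * pi^4 / 3 + (256 / pi\<^sup>2 - 8 * pi\<^sup>2 / 3) * pi^2 * u / 4"
    unfolding K4_val using pi_gt_zero by (simp add: field_simps eval_nat_numeral)
  show "f20 x < bound20 (256 / pi\<^sup>2 - 8 * pi\<^sup>2 / 3) x"
    unfolding sign_iff2[OF assms] u_def[symmetric]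
  proof -
    have "64 * ((1 - u)^2 * Sv x) < 64 * ((1 - u) * K4 + u)" using r by simp
    then show "64 * (1 - u)^2 * Sv x < 2 * pi^4 / 3 + (256 / pi\<^sup>2 - 8 * pi\<^sup>2 / 3) * pi^2 * u / 4"
      unfolding e' by (simp only: mult.assoc)
  qed
qed

lemma part2:
  assumes "a > 8 * pi^4 / 15 - 16 * pi\<^sup>2 / 3"
  shows "\<exists>x. 0 < x \<and> x < pi / 2 \<and> \<not> (bound20 a x < f20 x)"
proof -
  define c0 where "c0 = 8 * pi^4 / 15 - 16 * pi\<^sup>2 / 3"
  define d where "d = a - c0"
  have d: "d > 0" using assms by (simp add: d_def c0_def)
  define u where "u = min (1/2) (d / (32 * pi^2))"
  have u: "0 < u" "u \<le> 1/2" "u < 1" "u \<le> d / (32 * pi^2)" using d by (auto simp: u_def)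
  define x where "x = pi/2 * sqrt u"
  have x: "0 < x" "x < pi/2" "uu x = u" using uu_sqrt[OF u(1,3)] by (auto simp: x_def)
  have l: "(1 - u)^2 * Sv x \<le> K4 - 2 * u * (K4 - K6) + 12 * u^2 * K4"
    using lowerS2[OF x(1,2)] x(3) u by simp
  have e: "64 * (K4 - 2 * u * (K4 - K6) + 12 * u^2 * K4) = 2 * pi^4 / 3 + c0 * pi^2 * u / 4 + 8 * pi^4 * u^2"
    unfolding K4_val K6_val c0_def by (simp add: field_simps eval_nat_numeral)
  have "32 * pi^2 * u \<le> d" using u(4) pi_gt_zero by (simp add: field_simps)
  then have "(pi^2 * u / 4) * (32 * pi^2 * u) \<le> (pi^2 * u / 4) * d"
    using u by (intro mult_left_mono) auto
  then have q: "8 * pi^4 * u^2 \<le> d * pi^2 * u / 4" by (simp add: algebra_simps eval_nat_numeral)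
  have "64 * (1 - u)^2 * Sv x \<le> 2 * pi^4 / 3 + a * pi^2 * u / 4"
  proof -
    have "64 * ((1 - u)^2 * Sv x) \<le> 64 * (K4 - 2 * u * (K4 - K6) + 12 * u^2 * K4)" using l by simp
    then have "64 * (1 - u)^2 * Sv x \<le> 2 * pi^4 / 3 + c0 * pi^2 * u / 4 + 8 * pi^4 * u^2"
      unfolding e by (simp only: mult.assoc)
    also have "\<dots> \<le> 2 * pi^4 / 3 + c0 * pi^2 * u / 4 + d * pi^2 * u / 4" using q by linarith
    also have "\<dots> = 2 * pi^4 / 3 + a * pi^2 * u / 4" by (simp add: d_def field_simps)
    finally show ?thesis .
  qed
  then have "\<not> (bound20 a x < f20 x)" unfolding sign_iff[OF x(1,2)] x(3) by linarith
  then show ?thesis using x by blast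
qed

lemma part3:
  assumes "b < 256 / pi\<^sup>2 - 8 * pi\<^sup>2 / 3"
  shows "\<exists>x. 0 < x \<and> x < pi / 2 \<and> \<not> (f20 x < bound20 b x)"
proof -
  define c1 where "c1 = 256 / pi\<^sup>2 - 8 * pi\<^sup>2 / 3"
  define d where "d = c1 - b"
  have d: "d > 0" using assms by (simp add: d_def c1_def)
  define v where "v = min (1/2) (3 * d / (64 * pi^2))"
  have v: "0 < v" "v \<le> 1/2" "v \<le> 3 * d / (64 * pi^2)" using d by (auto simp: v_def)
  define u where "u = 1 - v"
  have u: "0 < u" "u < 1" "1/2 \<le> u" using v by (auto simp: u_def)
  define x where "x = pi/2 * sqrt u"
  have x: "0 < x" "x < pi/2" "uu x = u" using uu_sqrt[OF u(1,2)] by (auto simp: x_def)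
  have l: "(1 - u) * K4 + u - (1 - u)^2 * Sv x \<le> 4 * (1 - u) * K4"
    using upperS(2)[OF x(1,2)] x(3) by simp
  have e: "64 * ((1 - u) * K4 + u - 4 * (1 - u) * K4) = 2 * pi^4 / 3 + c1 * pi^2 * u / 4 - 8 * pi^4 / 3 * v"
    unfolding K4_val c1_def u_def using pi_gt_zero by (simp add: field_simps eval_nat_numeral)
  have "64 * pi^2 * v \<le> 3 * d" using v(3) pi_gt_zero by (simp add: field_simps)
  then have "(pi^2 / 24) * (64 * pi^2 * v) \<le> (pi^2 / 24) * (3 * d)"
    by (intro mult_left_mono) auto
  then have q1: "8 * pi^4 / 3 * v \<le> d * pi^2 / 8" by (simp add: algebra_simps eval_nat_numeral)
  have "d * pi^2 * (1/2) \<le> d * pi^2 * u" using u d by (intro mult_left_mono) auto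
  then have q: "8 * pi^4 / 3 * v \<le> d * pi^2 * u / 4" using q1 by simp
  have "2 * pi^4 / 3 + b * pi^2 * u / 4 \<le> 64 * (1 - u)^2 * Sv x"
  proof -
    have "2 * pi^4 / 3 + b * pi^2 * u / 4 = 2 * pi^4 / 3 + c1 * pi^2 * u / 4 - d * pi^2 * u / 4"
      by (simp add: d_def field_simps)
    also have "\<dots> \<le> 2 * pi^4 / 3 + c1 * pi^2 * u / 4 - 8 * pi^4 / 3 * v" using q by linarith
    also have "\<dots> \<le> 64 * (1 - u)^2 * Sv x"
    proof -
      have "(1 - u) * K4 + u - 4 * (1 - u) * K4 \<le> (1 - u)^2 * Sv x" using l by linarith
      then have "64 * ((1 - u) * K4 + u - 4 * (1 - u) * K4) \<le> 64 * ((1 - u)^2 * Sv x)" by simp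
      then show ?thesis unfolding e by (simp only: mult.assoc)
    qed
    finally show ?thesis .
  qed
  then have "\<not> (f20 x < bound20 b x)" unfolding sign_iff2[OF x(1,2)] x(3) by linarith
  then show ?thesis using x by blast
qed

theorem mainTheorem20:
  shows "(\<forall>x::real. 0 < x \<and> x < pi / 2 \<longrightarrow>
            bound20 (8 * pi^4 / 15 - 16 * pi\<^sup>2 / 3) x < f20 x \<and>
            f20 x < bound20 (256 / pi\<^sup>2 - 8 * pi\<^sup>2 / 3) x)
       \<and> (\<forall>a::real. a > 8 * pi^4 / 15 - 16 * pi\<^sup>2 / 3 \<longrightarrow>
            (\<exists>x. 0 < x \<and> x < pi / 2 \<and> \<not> (bound20 a x < f20 x)))
       \<and> (\<forall>b::real. b < 256 / pi\<^sup>2 - 8 * pi\<^sup>2 / 3 \<longrightarrow>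
            (\<exists>x. 0 < x \<and> x < pi / 2 \<and> \<not> (f20 x < bound20 b x)))"
  using part1 part2 part3 by blast


end
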